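(* Let $p$ be a prime, $m$ a positive integer, $q=p^m$, and $q-1=3s$ with $s$ a positive integer. Let $\gamma$ be a primitive element of $\mathbb{F}_q$ and $\xi=\gamma^s$ (so $\xi^3=1$, $\xi$ a primitive cube root of unity). Let $r$ be a positive integer and $f\in\mathbb{F}_q[x]$ with $f(x)\equiv ax^2+bx+c\pmod{x^3-1}$ for some $a,b,c\in\mathbb{F}_q$ satisfying $a^2+b^2+c^2-ab-bc-ca=1$. Let $A_i=f(\xi^i)$ for $i=0,1,2$ and $P(x)=x^rf(x^s)$. Then $P(x)$ is a permutation polynomial of $\mathbb{F}_q$ if and only if $\gcd(r,s)=1$, $A_i\neq0$ for $i=0,1,2$, $A_0^s=1$, $3\mid\mathrm{Ind}_\gamma(A_0)$, and $3\nmid r+\mathrm{Ind}_\gamma(A_2^2)$.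
   Context: A permutation polynomial of $\mathbb{F}_q$ is one inducing a bijection of $\mathbb{F}_q$. For nonzero $a\in\mathbb{F}_q$, $\mathrm{Ind}_\gamma(a)$ is the residue class $b\bmod(q-1)$ with $a=\gamma^b$; divisibility by $3$ is well defined since $3\mid q-1$. *)

theory Defs
  imports "HOL-Computational_Algebra.Polynomial" "HOL-Computational_Algebra.Primes"
begin

definition primitive_elem :: "'a::{field,finite} \<Rightarrow> bool" where
  "primitive_elem g \<longleftrightarrow> g \<noteq> 0 \<and> (\<forall>x. x \<noteq> 0 \<longrightarrow> (\<exists>k::nat. x = g ^ k))"

definition Ind :: "'a::{field,finite} \<Rightarrow> 'a \<Rightarrow> nat" where
  "Ind g a = (LEAST b::nat. g ^ b = a)"

definition perm_poly :: "'a::{field,finite} poly \<Rightarrow> bool" where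
  "perm_poly P \<longleftrightarrow> bij (\<lambda>x. poly P x)"

end

theory Submission
  imports Defs
begin

lemma fermat_field:
  fixes x :: "'a::{field,finite}"
  assumes "x \<noteq> 0"
  shows "x ^ (card (UNIV::'a set) - 1) = 1"
proof -
  let ?S = "UNIV - {0::'a}"
  have cardS: "card ?S = card (UNIV::'a set) - 1" by (simp add: card_Diff_singleton)
  have inj: "inj_on (\<lambda>y. x*y) ?S" using assms by (auto simp: inj_on_def)
  have img: "(\<lambda>y. x*y) ` ?S = ?S"
  proof
    show "(\<lambda>y. x*y) ` ?S \<subseteq> ?S" using assms by auto
    show "?S \<subseteq> (\<lambda>y. x*y) ` ?S"
    proof
      fix z assume "z \<in> ?S"
      then have "z = x * (z / x)" "z/x \<in> ?S" using assms by auto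
      then show "z \<in> (\<lambda>y. x*y) ` ?S" by blast
    qed
  qed
  have "prod (\<lambda>y. y) ?S = prod (\<lambda>y. y) ((\<lambda>y. x*y) ` ?S)" using img by simp
  also have "\<dots> = prod (\<lambda>y. x*y) ?S" using prod.reindex[OF inj] by simp
  also have "\<dots> = x ^ card ?S * prod (\<lambda>y. y) ?S" by (simp add: prod.distrib)
  finally have "prod (\<lambda>y. y) ?S = x ^ card ?S * prod (\<lambda>y. y) ?S" .
  moreover have "prod (\<lambda>y. y) ?S \<noteq> 0" by simp
  ultimately show ?thesis using cardS by simp
qed

lemma card_ge2: "card (UNIV::'a::{field,finite} set) \<ge> 2"
proof -
  have "card {0::'a,1} \<le> card (UNIV::'a set)" by (intro card_mono) auto
  then show ?thesis by simp
qed

lemma prim_pow_eq: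
  fixes g :: "'a::{field,finite}"
  assumes "primitive_elem g"
  shows "g^i = g^j \<longleftrightarrow> i mod (card (UNIV::'a set) - 1) = j mod (card (UNIV::'a set) - 1)"
proof -
  define n where "n = card (UNIV::'a set) - 1"
  have n0: "n > 0" using card_ge2[where 'a='a] n_def by linarith
  have g0: "g \<noteq> 0" and gen: "\<And>x. x \<noteq> 0 \<Longrightarrow> \<exists>k. x = g^k"
    using assms primitive_elem_def by auto
  have gn: "g^n = 1" using fermat_field[OF g0] n_def by simp
  have red: "g^k = g^(k mod n)" for k
  proof -
    have "g^k = g^(n*(k div n) + k mod n)" by simp
    also have "\<dots> = (g^n)^(k div n) * g^(k mod n)" by (simp only: power_add power_mult)
    finally show ?thesis using gn by simp
  qed
  have noper: "g^d \<noteq> 1" if "0 < d" "d < n" for d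
  proof
    assume gd: "g^d = 1"
    have "UNIV - {0} \<subseteq> (\<lambda>k. g^k) ` {..<d}"
    proof
      fix x assume "x \<in> (UNIV - {0::'a})"
      then obtain k where xk: "x = g^k" using gen by auto
      have "g^k = g^(d*(k div d) + k mod d)" by simp
      also have "\<dots> = (g^d)^(k div d) * g^(k mod d)" by (simp only: power_add power_mult)
      also have "\<dots> = g^(k mod d)" using gd by simp
      finally show "x \<in> (\<lambda>k. g^k) ` {..<d}" using xk that(1) by auto
    qed
    then have "card (UNIV - {0::'a}) \<le> card ((\<lambda>k. g^k) ` {..<d})" by (intro card_mono) auto
    also have "\<dots> \<le> d" using card_image_le[of "{..<d}" "\<lambda>k. g^k"] by simp
    finally show False using that n_def by (simp add: card_Diff_singleton)
  qed
  have key: "g^(y-x) = 1" if "x<y" "g^x = g^y" for x y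
  proof -
    have "g^x * g^(y-x) = g^(x + (y-x))" by (simp only: power_add)
    also have "\<dots> = g^x * 1" using that by simp
    finally have "g^x * g^(y-x) = g^x * 1" .
    then show ?thesis using g0 by simp
  qed
  have inj: "a = b" if "a < n" "b < n" "g^a = g^b" for a b
  proof (rule ccontr)
    assume "a \<noteq> b"
    then consider "a < b" | "b < a" by linarith
    then show False
    proof cases
      case 1 then show False using key[of a b] noper[of "b-a"] that by auto
    next
      case 2 then show False using key[of b a] noper[of "a-b"] that by auto
    qed
  qed
  have "g^i = g^j \<longleftrightarrow> g^(i mod n) = g^(j mod n)" using red by metis
  also have "\<dots> \<longleftrightarrow> i mod n = j mod n" using inj n0 by auto
  finally show ?thesis using n_def by simp
qed

lemma nt_lemma:
  fixes i j r s :: nat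
  assumes "coprime r s" "i mod 3 = j mod 3" "(i*r) mod (3*s) = (j*r) mod (3*s)"
  shows "i mod (3*s) = j mod (3*s)"
proof -
  have "(3::int) dvd (int i - int j)" using assms(2)
    by (metis mod_eq_dvd_iff of_nat_mod of_nat_numeral)
  then obtain d where d: "int i - int j = 3*d" by blast
  have "int (3*s) dvd (int i * int r - int j * int r)" using assms(3)
    by (metis mod_eq_dvd_iff of_nat_mod of_nat_mult)
  then have "int (3*s) dvd (3*d*int r)" using d by (simp add: left_diff_distrib[symmetric])
  then have "int s dvd d * int r" by (simp add: mult.assoc)
  moreover have "coprime (int s) (int r)" using assms(1) by (simp add: coprime_commute)
  ultimately have "int s dvd d" using coprime_dvd_mult_left_iff by blast
  then have "int (3*s) dvd (int i - int j)" using d by simp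
  then show ?thesis by (metis mod_eq_dvd_iff of_nat_mod int_int_eq)
qed



lemma mu3_lemma:
  fixes x B0 B1 B2 :: "'a::field"
  assumes x1: "x \<noteq> 1" and x2: "x^2 \<noteq> 1" and x3: "x^2 \<noteq> x" and xx: "x*x^2 = 1"
    and b0: "B0 = 1 \<or> B0 = x \<or> B0 = x^2" and b1: "B1 = 1 \<or> B1 = x \<or> B1 = x^2"
    and b12: "B1*B2 = 1"
  shows "(B0\<noteq>B1 \<and> B0\<noteq>B2 \<and> B1\<noteq>B2) \<longleftrightarrow> (B0 = 1 \<and> B1 \<noteq> 1)"
proof -
  have x0: "x \<noteq> 0" using xx by auto
  have x20: "x^2 \<noteq> 0" using xx by auto
  consider "B1 = 1" "B2 = 1" | "B1 = x" "B2 = x^2" | "B1 = x^2" "B2 = x"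
  proof -
    from b1 consider "B1 = 1" | "B1 = x" | "B1 = x^2" by blast
    then show ?thesis
    proof cases
      case 1 then have "B2 = 1" using b12 by simp
      then show ?thesis using 1 that by blast
    next
      case 2 then have "x * B2 = x * x^2" using b12 xx by simp
      then have "B2 = x^2" using x0 by simp
      then show ?thesis using 2 that by blast
    next
      case 3 then have "x^2 * B2 = x^2 * x" using b12 xx by (simp add: mult.commute)
      then have "B2 = x" using x20 by simp
      then show ?thesis using 3 that by blast
    qed
  qed
  then show ?thesis
  proof cases
    case 1 then show ?thesis by simp
  next
    case 2 then show ?thesis using b0 x1 x2 x3 by metis
  next
    case 3 then show ?thesis using b0 x1 x2 x3 by metis
  qed
qed

lemma three_dist:
  fixes B :: "nat \<Rightarrow> 'a"
  assumes "t0 < 3" "t1 < 3" "t2 < 3" "B t0 = u0" "B t1 = u1" "B t2 = u2"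
    "u0 \<noteq> u1" "u0 \<noteq> u2" "u1 \<noteq> u2"
  shows "B 0 \<noteq> B 1 \<and> B 0 \<noteq> B 2 \<and> B 1 \<noteq> B 2"
proof -
  have l: "t = 0 \<or> t = 1 \<or> t = 2" if "t < (3::nat)" for t using that by auto
  show ?thesis using l[OF assms(1)] l[OF assms(2)] l[OF assms(3)] assms(4-9)
    by (elim disjE) auto
qed

theorem theorem3p4:
  fixes p m s r :: nat and \<gamma> a b c :: "'a::{field,finite}" and f :: "'a poly"
  assumes "prime p" and "m > 0" and "card (UNIV :: 'a set) = p ^ m"
    and "card (UNIV :: 'a set) - 1 = 3 * s" and "s > 0"
    and "primitive_elem \<gamma>"
    and "r > 0"
    and "f mod [:-1, 0, 0, 1:] = [:c, b, a:]"
    and "a^2 + b^2 + c^2 - a*b - b*c - c*a = 1"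
  shows "perm_poly (monom 1 r * pcompose f (monom 1 s)) \<longleftrightarrow>
    (gcd r s = 1 \<and> (\<forall>i\<in>{0,1,2::nat}. poly f ((\<gamma>^s)^i) \<noteq> 0)
     \<and> (poly f 1) ^ s = 1
     \<and> 3 dvd Ind \<gamma> (poly f 1)
     \<and> \<not> 3 dvd (r + Ind \<gamma> ((poly f ((\<gamma>^s)^2))^2)))"
proof -
  define n where "n = 3*s"
  have nC: "card (UNIV::'a set) - 1 = n" using assms(4) n_def by simp
  have geq: "\<gamma>^i = \<gamma>^j \<longleftrightarrow> i mod n = j mod n" for i j
    using prim_pow_eq[OF assms(6)] nC by simp
  have g0: "\<gamma> \<noteq> 0" and gen: "\<And>x. x \<noteq> 0 \<Longrightarrow> \<exists>k. x = \<gamma>^k"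
    using assms(6) primitive_elem_def by auto
  have gpow0: "\<gamma>^k \<noteq> 0" for k using g0 by simp
  have fermat: "w ^ n = 1" if "w \<noteq> 0" for w :: 'a using fermat_field[OF that] nC by simp
  have Ind: "\<gamma>^(Ind \<gamma> w) = w" if w0: "w \<noteq> 0" for w :: 'a
  proof -
    obtain k where "w = \<gamma>^k" using gen[OF w0] by blast
    then show ?thesis unfolding Ind_def by (metis (mono_tags, lifting) LeastI)
  qed
  define \<xi> where "\<xi> = \<gamma>^s"
  have xipow: "\<xi>^k = \<gamma>^(s*k)" for k by (simp add: \<xi>_def power_mult)
  have xi1: "\<xi>^k = 1 \<longleftrightarrow> 3 dvd k" for k
  proof -
    have "\<xi>^k = 1 \<longleftrightarrow> \<gamma>^(s*k) = \<gamma>^0" by (simp add: xipow)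
    also have "\<dots> \<longleftrightarrow> (s*k) mod (s*3) = 0" using geq[of "s*k" 0] n_def by (simp add: mult.commute)
    also have "\<dots> \<longleftrightarrow> 3 dvd k" using assms(5) by (simp add: dvd_eq_mod_eq_0)
    finally show ?thesis .
  qed
  have xi3: "\<xi>^3 = 1" using xi1 by simp
  have xi_ne1: "\<xi> \<noteq> 1" using xi1[of 1] by simp
  have xi2_ne1: "\<xi>^2 \<noteq> 1" using xi1[of 2] by simp
  have xi0: "\<xi> \<noteq> 0" using xi3 by auto
  have xim: "\<xi>^k = \<xi>^(k mod 3)" for k
  proof -
    have "\<xi>^k = \<xi>^(3*(k div 3) + k mod 3)" by simp
    also have "\<dots> = (\<xi>^3)^(k div 3) * \<xi>^(k mod 3)" by (simp only: power_add power_mult)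
    finally show ?thesis using xi3 by simp
  qed
  have xisum: "\<xi>^2 + \<xi> + 1 = 0"
  proof -
    have "(\<xi> - 1) * (\<xi>^2 + \<xi> + 1) = \<xi>^3 - 1" by (simp add: algebra_simps power2_eq_square power3_eq_cube)
    then have "(\<xi> - 1) * (\<xi>^2 + \<xi> + 1) = 0" using xi3 by simp
    then show ?thesis using xi_ne1 by simp
  qed
  have xi_ne_xi2: "\<xi>^2 \<noteq> \<xi>"
  proof
    assume "\<xi>^2 = \<xi>"
    then have "\<xi> * \<xi> = \<xi> * 1" by (simp add: power2_eq_square)
    then show False using xi0 xi_ne1 by simp
  qed
  have xiprods: "\<xi>*\<xi>^2 = 1" "\<xi>^2*\<xi> = 1" "\<xi>*\<xi> = \<xi>^2" "\<xi>^2*\<xi>^2 = \<xi>"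
  proof -
    show "\<xi>*\<xi>^2 = 1" using xi3 by (simp add: power3_eq_cube power2_eq_square mult.assoc)
    then show "\<xi>^2*\<xi> = 1" by (simp add: mult.commute)
    show "\<xi>*\<xi> = \<xi>^2" by (simp add: power2_eq_square)
    have "\<xi>^2*\<xi>^2 = \<xi>^3 * \<xi>" by (simp add: power2_eq_square power3_eq_cube)
    then show "\<xi>^2*\<xi>^2 = \<xi>" using xi3 by simp
  qed
  define A where "A t = poly f (\<xi>^t)" for t
  have Aval: "A t = a*(\<xi>^t)^2 + b*\<xi>^t + c" for t
  proof -
    let ?g = "[:-1, 0, 0, 1:] :: 'a poly"
    have "f = f div ?g * ?g + f mod ?g" by (rule div_mult_mod_eq[symmetric])
    then have "poly f (\<xi>^t) = poly (f div ?g) (\<xi>^t) * poly ?g (\<xi>^t) + poly [:c,b,a:] (\<xi>^t)"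
      using assms(8) by (metis poly_add poly_mult)
    moreover have "poly ?g z = z^3 - 1" for z by (simp add: algebra_simps power3_eq_cube)
    moreover have "(\<xi>^t)^3 = 1" using xi3 by (metis power_mult mult.commute power_one)
    moreover have "poly [:c,b,a:] z = a*z^2 + b*z + c" for z by (simp add: algebra_simps power2_eq_square)
    ultimately show ?thesis by (simp add: A_def)
  qed
  have A12: "A 1 * A 2 = 1"
  proof -
    have "A 1 * A 2 = (a*\<xi>^2 + b*\<xi> + c) * (a*(\<xi>^2)^2 + b*\<xi>^2 + c)"
      using Aval[of 1] Aval[of 2] by simp
    also have "\<dots> = 1" using xi3 xisum assms(9) by algebra
    finally show ?thesis .
  qed
  have A1nz: "A 1 \<noteq> 0" and A2nz: "A 2 \<noteq> 0" using A12 by auto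
  define P where "P = monom 1 r * pcompose f (monom 1 s)"
  have Pev: "poly P x = x^r * poly f (x^s)" for x by (simp add: P_def poly_monom poly_pcompose)
  have gks: "(\<gamma>^k)^s = \<xi>^(k mod 3)" for k
    using xipow xim by (metis mult.commute power_mult)
  have Pg: "poly P (\<gamma>^k) = \<gamma>^(k*r) * A (k mod 3)" for k
    using Pev gks by (simp add: A_def power_mult)
  have P0: "poly P 0 = 0" using assms(7) Pev by simp
  define B where "B t = \<xi>^(t*r) * A t ^ s" for t
  have PB: "(poly P (\<gamma>^k))^s = B (k mod 3)" for k
  proof -
    have "(poly P (\<gamma>^k))^s = \<gamma>^(s*(k*r)) * A (k mod 3) ^ s"
      using Pg by (simp add: power_mult_distrib power_mult[symmetric] mult.commute)
    also have "\<gamma>^(s*(k*r)) = \<xi>^(k*r)" using xipow by simp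
    also have "\<xi>^(k*r) = \<xi>^(k mod 3 * r)" using xim by (metis mod_mult_left_eq)
    finally show ?thesis by (simp add: B_def)
  qed
  have wcube: "w = 1 \<or> w = \<xi> \<or> w = \<xi>^2" if "w^3 = 1" for w :: 'a
  proof -
    have "w \<noteq> 0" using that by auto
    then obtain k where k: "w = \<gamma>^k" using gen by blast
    then have "\<gamma>^(3*k) = \<gamma>^0" using that by (simp add: power_mult mult.commute)
    then have "(3*k) mod (3*s) = 0" using geq[of "3*k" 0] n_def by simp
    then have "s dvd k" by (simp add: dvd_eq_mod_eq_0)
    then obtain j where "k = s*j" by blast
    then have "w = \<xi>^(j mod 3)" using k xipow xim by simp
    moreover have "j mod 3 = 0 \<or> j mod 3 = 1 \<or> j mod 3 = 2" by presburger
    ultimately show ?thesis by (metis power_0 power_one_right)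
  qed
  have Bcube: "(B t)^3 = 1" if "A t \<noteq> 0" for t
  proof -
    have "(B t)^3 = (\<xi>^3)^(t*r) * A t ^ (3*s)"
      by (simp add: B_def power_mult_distrib power_mult[symmetric] mult.commute)
    then show ?thesis using xi3 fermat[OF that] n_def by simp
  qed
  have A1s: "A 1 ^ s = A 2 ^ (2*s)"
  proof -
    have "A 1 ^ s = A 1 ^ s * A 2 ^ (3*s)" using fermat[OF A2nz] n_def by simp
    also have "\<dots> = (A 1 * A 2)^s * A 2 ^ (2*s)"
      by (simp add: power_mult_distrib power_add[symmetric])
    finally show ?thesis using A12 by simp
  qed
  have B12: "B 1 * B 2 = 1"
  proof -
    have "B 1 * B 2 = (\<xi>^3)^r * (A 1 * A 2)^s"
      by (simp add: B_def power_mult_distrib power_mult[symmetric] power_add[symmetric] algebra_simps)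
    then show ?thesis using xi3 A12 by simp
  qed
  have B1iff: "B 1 = 1 \<longleftrightarrow> 3 dvd (r + Ind \<gamma> (A 2 ^ 2))"
  proof -
    define e where "e = Ind \<gamma> (A 2 ^ 2)"
    have ge: "\<gamma>^e = A 2 ^ 2" using Ind A2nz e_def by simp
    have "B 1 = \<xi>^r * (\<gamma>^e)^s" using A1s ge by (simp add: B_def power_mult)
    also have "(\<gamma>^e)^s = \<xi>^e" using xipow by (simp add: power_mult[symmetric] mult.commute)
    finally have "B 1 = \<xi>^(r+e)" by (simp add: power_add)
    then show ?thesis using xi1 e_def by simp
  qed
  have Ind0: "A 0 ^ s = 1 \<longleftrightarrow> 3 dvd Ind \<gamma> (A 0)" if "A 0 \<noteq> 0"
  proof -
    define e where "e = Ind \<gamma> (A 0)"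
    have "A 0 ^ s = (\<gamma>^e)^s" using Ind that e_def by simp
    also have "\<dots> = \<xi>^e" using xipow by (simp add: power_mult[symmetric] mult.commute)
    finally show ?thesis using xi1 e_def by simp
  qed
  have Bdist: "(B 0 \<noteq> B 1 \<and> B 0 \<noteq> B 2 \<and> B 1 \<noteq> B 2) \<longleftrightarrow> (B 0 = 1 \<and> B 1 \<noteq> 1)"
    if "A 0 \<noteq> 0"
  proof -
    have "B 0 = 1 \<or> B 0 = \<xi> \<or> B 0 = \<xi>^2" using wcube Bcube that by blast
    moreover have "B 1 = 1 \<or> B 1 = \<xi> \<or> B 1 = \<xi>^2" using wcube Bcube A1nz by blast
    moreover have "B 2 = 1 \<or> B 2 = \<xi> \<or> B 2 = \<xi>^2" using wcube Bcube A2nz by blast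
    ultimately show ?thesis using mu3_lemma[OF xi_ne1 xi2_ne1 xi_ne_xi2 xiprods(1) _ _ B12] by blast
  qed
  have lt3: "t = 0 \<or> t = 1 \<or> t = 2" if "t < (3::nat)" for t using that by auto
  have RHS: "(gcd r s = 1 \<and> (\<forall>i\<in>{0,1,2::nat}. poly f ((\<gamma>^s)^i) \<noteq> 0)
     \<and> (poly f 1) ^ s = 1
     \<and> 3 dvd Ind \<gamma> (poly f 1)
     \<and> \<not> 3 dvd (r + Ind \<gamma> ((poly f ((\<gamma>^s)^2))^2))) \<longleftrightarrow>
     (gcd r s = 1 \<and> A 0 \<noteq> 0 \<and> A 1 \<noteq> 0 \<and> A 2 \<noteq> 0 \<and> A 0 ^ s = 1 \<and> 3 dvd Ind \<gamma> (A 0)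
      \<and> \<not> 3 dvd (r + Ind \<gamma> (A 2 ^ 2)))"
    by (simp add: A_def \<xi>_def)
  have bij_inj: "bij (poly P) \<longleftrightarrow> inj (poly P)"
    using finite_UNIV_inj_surj[of "poly P"] by (auto simp: bij_def)
  have Pnz: "poly P x \<noteq> 0" if x0: "x \<noteq> 0" and An: "\<And>t. t < 3 \<Longrightarrow> A t \<noteq> 0" for x
  proof -
    obtain k where "x = \<gamma>^k" using gen x0 by blast
    then show ?thesis using Pg[of k] An[of "k mod 3"] gpow0 by simp
  qed
  show ?thesis
    unfolding RHS perm_poly_def P_def[symmetric] bij_inj
  proof
    assume inj: "inj (poly P)"
    then have surj: "surj (poly P)" using finite_UNIV_inj_surj[of "poly P"] by simp
    have Anz: "A t \<noteq> 0" if "t < 3" for t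
    proof
      assume "A t = 0"
      then have "poly P (\<gamma>^t) = poly P 0" using Pg[of t] P0 that by simp
      then show False using inj gpow0 by (metis injD)
    qed
    have gcd1: "gcd r s = 1"
    proof (rule ccontr)
      assume gne: "gcd r s \<noteq> 1"
      define g where "g = gcd r s"
      have gpos: "g > 1" using gne assms(5) g_def
        by (metis gcd_pos_nat less_one nat_neq_iff)
      have gdvd: "g dvd s" "g dvd r" using g_def by auto
      define t where "t = 3 * (s div g)"
      have t0: "t > 0" using gdvd assms(5) t_def
        by (metis dvd_div_eq_0_iff nat_0_less_mult_iff not_gr_zero zero_less_numeral)
      have tn: "t < n" using gpos assms(5) t_def n_def by simp
      have "(s div g) * r = s * (r div g)" using gdvd
        by (metis div_mult_swap dvd_div_mult mult.commute)
      then have sg: "(s div g) * r = s * (r div g)" .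
      have "(1+t)*r = r + 3*((s div g)*r)" by (simp add: t_def algebra_simps)
      also have "\<dots> = r + n*(r div g)" using sg by (simp add: n_def)
      finally have "((1 + t) * r) mod n = (1*r) mod n" by simp
      then have e1: "\<gamma>^((1+t)*r) = \<gamma>^(1*r)" using geq by blast
      have e2: "(1 + t) mod 3 = 1 mod 3" using t_def by simp
      have "poly P (\<gamma>^(1+t)) = poly P (\<gamma>^1)" using Pg[of "1+t"] Pg[of 1] e1 e2 by simp
      then have "\<gamma>^(1+t) = \<gamma>^1" using inj by (metis injD)
      then have md: "(1+t) mod n = 1 mod n" using geq by blast
      have n3: "n \<ge> 3" using assms(5) n_def by simp
      then have m1: "1 mod n = 1" by simp
      show False
      proof (cases "1+t < n")
        case True
        then have "(1+t) mod n = 1+t" by simp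
        then show False using md m1 t0 by simp
      next
        case False
        then have "1+t = n" using tn by simp
        then have "(1+t) mod n = 0" by simp
        then show False using md m1 by simp
      qed
    qed
    have hit: "\<exists>t<3. B t = \<xi>^u" for u
    proof -
      obtain x where x: "poly P x = \<gamma>^u" using surj by (metis surj_def)
      then have "x \<noteq> 0" using P0 gpow0[of u] by auto
      then obtain k where k: "x = \<gamma>^k" using gen by blast
      have "B (k mod 3) = (\<gamma>^u)^s" using PB[of k] x k by simp
      also have "\<dots> = \<xi>^u" using xipow by (simp add: power_mult[symmetric] mult.commute)
      finally show ?thesis by (intro exI[of _ "k mod 3"]) simp
    qed
    obtain t0 t1 t2 where t: "t0 < 3" "t1 < 3" "t2 < 3" "B t0 = 1" "B t1 = \<xi>" "B t2 = \<xi>^2"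
      using hit[of 0] hit[of 1] hit[of 2] by auto
    have dist: "B 0 \<noteq> B 1 \<and> B 0 \<noteq> B 2 \<and> B 1 \<noteq> B 2"
      by (rule three_dist[OF t]) (use xi_ne1 xi2_ne1 xi_ne_xi2 in auto)
    then have "B 0 = 1 \<and> B 1 \<noteq> 1" using Bdist Anz by simp
    then show "gcd r s = 1 \<and> A 0 \<noteq> 0 \<and> A 1 \<noteq> 0 \<and> A 2 \<noteq> 0 \<and> A 0 ^ s = 1 \<and> 3 dvd Ind \<gamma> (A 0)
      \<and> \<not> 3 dvd (r + Ind \<gamma> (A 2 ^ 2))"
      using gcd1 Anz Ind0 B1iff by (simp add: B_def)
  next
    assume H: "gcd r s = 1 \<and> A 0 \<noteq> 0 \<and> A 1 \<noteq> 0 \<and> A 2 \<noteq> 0 \<and> A 0 ^ s = 1 \<and> 3 dvd Ind \<gamma> (A 0)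
      \<and> \<not> 3 dvd (r + Ind \<gamma> (A 2 ^ 2))"
    have Anz: "A t \<noteq> 0" if "t < 3" for t using H lt3[OF that] by auto
    have "B 0 = 1 \<and> B 1 \<noteq> 1" using H B1iff by (simp add: B_def)
    then have dist: "B 0 \<noteq> B 1 \<and> B 0 \<noteq> B 2 \<and> B 1 \<noteq> B 2" using Bdist H by simp
    have Binj: "i = j" if "i < 3" "j < 3" "B i = B j" for i j
      using lt3[OF that(1)] lt3[OF that(2)] that(3) dist by (elim disjE) auto
    show "inj (poly P)"
    proof (rule injI)
      fix x y assume xy: "poly P x = poly P y"
      show "x = y"
      proof (cases "x = 0 \<or> y = 0")
        case True
        then show ?thesis using xy Pnz[OF _ Anz] P0 by metis
      next
        case False
        then obtain i j where i: "x = \<gamma>^i" and j: "y = \<gamma>^j" using gen by metis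
        have "B (i mod 3) = B (j mod 3)" using PB[of i] PB[of j] xy i j by simp
        then have ij3: "i mod 3 = j mod 3" using Binj by simp
        have "\<gamma>^(i*r) * A (i mod 3) = \<gamma>^(j*r) * A (i mod 3)"
          using Pg[of i] Pg[of j] xy i j ij3 by simp
        then have "\<gamma>^(i*r) = \<gamma>^(j*r)" using Anz[of "i mod 3"] by simp
        then have "(i*r) mod n = (j*r) mod n" using geq by blast
        then have "i mod n = j mod n" using nt_lemma[of r s i j] H ij3 n_def
          by (simp add: coprime_iff_gcd_eq_1)
        then show ?thesis using geq i j by blast
      qed
    qed
  qed
qed

end
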